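(* Let $n\geq 3$ and let $k\in\mathbb{Z}_n$ with $k\neq 0$ and $2k\not\equiv 0\pmod n$. Let $C$ be a subset of the vertex set of $\mathrm{GP}(n,k)$. Then $C$ is a total perfect code in $\mathrm{GP}(n,k)$ if and only if one of the following holds: (i) $n\equiv 0\pmod 3$, $k\not\equiv 0\pmod 3$, and $C=C_j:=\{u_{3i+j},v_{3i+j}\mid i\in\mathbb{Z}_n\}$ for some $j\in\{0,1,2\}$; (ii) $n\equiv 0\pmod 6$, $k\equiv \pm 1\pmod 6$, and $C=C'_j:=\{u_{6i+j},u_{6i+j+1},v_{6i+j+3},v_{6i+j+4}\mid i\in\mathbb{Z}_n\}$ for some $j\in\{0,1,2,3,4,5\}$ (all indices modulo $n$).
   Context: For an integer $n\geq 3$ and a nonzero $k\in\mathbb{Z}_n$, the generalized Petersen graph $\mathrm{GP}(n,k)$ is the simple graph with vertex set $\{u_i,v_i\mid i\in\mathbb{Z}_n\}$ and edges $u_iu_{i+1}$, $u_iv_i$, $v_iv_{i+k}$ for all $i\in\mathbb{Z}_n$ (indices modulo $n$). Standing assumption: $2k\not\equiv 0\pmod n$, so that $\mathrm{GP}(n,k)$ is 3-regular. Congruences of $k$ modulo divisors of $n$ are well defined. A total perfect code in a graph $\Gamma$ is a set $C\subseteq V(\Gamma)$ such that every vertex of $\Gamma$ (whether in $C$ or not) is adjacent to exactly one vertex of $C$. *)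

theory Defs
  imports Main
begin

text \<open>Vertices of GP(n,k): U i = u_i, V i = v_i, with i in {0..<n} representing Z_n.\<close>
datatype gpv = U nat | V nat

definition gp_verts :: "nat \<Rightarrow> gpv set" where
  "gp_verts n = {U i | i. i < n} \<union> {V i | i. i < n}"

definition gp_edge :: "nat \<Rightarrow> nat \<Rightarrow> gpv \<Rightarrow> gpv \<Rightarrow> bool" where
  "gp_edge n k x y \<longleftrightarrow> (\<exists>i<n. (x = U i \<and> y = U ((i + 1) mod n))
                              \<or> (x = U i \<and> y = V i)
                              \<or> (x = V i \<and> y = V ((i + k) mod n)))"

definition gp_adj :: "nat \<Rightarrow> nat \<Rightarrow> gpv \<Rightarrow> gpv \<Rightarrow> bool" where
  "gp_adj n k x y \<longleftrightarrow> gp_edge n k x y \<or> gp_edge n k y x"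

definition total_perfect_code :: "nat \<Rightarrow> nat \<Rightarrow> gpv set \<Rightarrow> bool" where
  "total_perfect_code n k C \<longleftrightarrow> C \<subseteq> gp_verts n \<and>
     (\<forall>x\<in>gp_verts n. card {c \<in> C. gp_adj n k x c} = 1)"

definition code_C :: "nat \<Rightarrow> nat \<Rightarrow> gpv set" where
  "code_C n j = {U ((3*i + j) mod n) | i. i < n} \<union> {V ((3*i + j) mod n) | i. i < n}"

definition code_C' :: "nat \<Rightarrow> nat \<Rightarrow> gpv set" where
  "code_C' n j = {U ((6*i + j) mod n) | i. i < n} \<union> {U ((6*i + j + 1) mod n) | i. i < n}
               \<union> {V ((6*i + j + 3) mod n) | i. i < n} \<union> {V ((6*i + j + 4) mod n) | i. i < n}"

end

theory Submission
  imports Defs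
begin


definition ex1 :: "bool \<Rightarrow> bool \<Rightarrow> bool \<Rightarrow> bool" where
  "ex1 p q r \<longleftrightarrow> (p \<and> \<not> q \<and> \<not> r) \<or> (\<not> p \<and> q \<and> \<not> r) \<or> (\<not> p \<and> \<not> q \<and> r)"

lemma pred_mod:
  assumes "i < (n::nat)" shows "((i + n - 1) mod n + 1) mod n = i"
proof -
  have "((i + n - 1) mod n + 1) mod n = (i + n - 1 + 1) mod n" by (simp add: mod_Suc_eq)
  also have "i + n - 1 + 1 = i + n" using assms by simp
  finally show ?thesis using assms by simp
qed

lemma pred_mod2:
  assumes "j < (n::nat)" "(j + 1) mod n = i" shows "j = (i + n - 1) mod n"
proof (cases "j + 1 < n")
  case True
  then have "i = j + 1" using assms by simp
  then show ?thesis using assms by simp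
next
  case False
  then have "j + 1 = n" using assms by simp
  then have "i = 0" using assms by auto
  then show ?thesis using \<open>j + 1 = n\<close> by simp
qed

lemma predk_mod:
  assumes "i < (n::nat)" "k \<le> n" shows "((i + n - k) mod n + k) mod n = i"
proof -
  have "((i + n - k) mod n + k) mod n = (i + n - k + k) mod n" by (simp add: mod_add_left_eq)
  also have "i + n - k + k = i + n" using assms by simp
  finally show ?thesis using assms by simp
qed

lemma predk_mod2:
  assumes "j < (n::nat)" "k \<le> n" "(j + k) mod n = i" shows "j = (i + n - k) mod n"
proof (cases "j + k < n")
  case True
  then have "i = j + k" using assms by simp
  then show ?thesis using assms by simp
next
  case False
  then have "i = j + k - n" using assms
  proof -
    have "j + k < 2 * n" using assms by simp
    then have "(j + k) mod n = j + k - n" using False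
      by (simp add: le_mod_geq)
    then show ?thesis using assms by simp
  qed
  then have "i + n - k = j" using assms False by simp
  then show ?thesis using assms by simp
qed

lemma nbrU:
  assumes "3 \<le> n" "i < n"
  shows "gp_adj n k (U i) c \<longleftrightarrow> c = U ((i + n - 1) mod n) \<or> c = U ((i+1) mod n) \<or> c = V i"
proof
  assume "gp_adj n k (U i) c"
  then show "c = U ((i + n - 1) mod n) \<or> c = U ((i+1) mod n) \<or> c = V i"
    unfolding gp_adj_def gp_edge_def using pred_mod2 by auto
next
  assume "c = U ((i + n - 1) mod n) \<or> c = U ((i+1) mod n) \<or> c = V i"
  moreover have "gp_edge n k (U ((i + n - 1) mod n)) (U i)"
    unfolding gp_edge_def using assms pred_mod[OF assms(2)]
    by (intro exI[of _ "(i + n - 1) mod n"]) simp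
  moreover have "gp_edge n k (U i) (U ((i+1) mod n))" "gp_edge n k (U i) (V i)"
    unfolding gp_edge_def using assms by auto
  ultimately show "gp_adj n k (U i) c"
    unfolding gp_adj_def by blast
qed

lemma nbrV:
  assumes "k < n" "i < n"
  shows "gp_adj n k (V i) c \<longleftrightarrow> c = U i \<or> c = V ((i + n - k) mod n) \<or> c = V ((i+k) mod n)"
proof
  assume "gp_adj n k (V i) c"
  then show "c = U i \<or> c = V ((i + n - k) mod n) \<or> c = V ((i+k) mod n)"
    unfolding gp_adj_def gp_edge_def using predk_mod2 assms by auto
next
  assume "c = U i \<or> c = V ((i + n - k) mod n) \<or> c = V ((i+k) mod n)"
  moreover have "gp_edge n k (V ((i + n - k) mod n)) (V i)"
    unfolding gp_edge_def using assms predk_mod[OF assms(2), of k]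
    by (intro exI[of _ "(i + n - k) mod n"]) simp
  moreover have "gp_edge n k (U i) (V i)" "gp_edge n k (V i) (V ((i+k) mod n))"
    unfolding gp_edge_def using assms by auto
  ultimately show "gp_adj n k (V i) c"
    unfolding gp_adj_def by blast
qed

lemma card3:
  assumes "p \<noteq> q" "p \<noteq> r" "q \<noteq> r"
  shows "card {c \<in> C. c = p \<or> c = q \<or> c = r} = 1 \<longleftrightarrow> ex1 (p \<in> C) (q \<in> C) (r \<in> C)"
proof -
  have e: "{c \<in> C. c = p \<or> c = q \<or> c = r} = (if p \<in> C then {p} else {}) \<union> (if q \<in> C then {q} else {}) \<union> (if r \<in> C then {r} else {})"
    by auto
  show ?thesis unfolding e ex1_def using assms by (auto simp: card_insert_if)
qed

lemma natmod_plus: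
  assumes "0 < n"
  shows "nat ((x + int d) mod int n) = (nat (x mod int n) + d) mod n"
proof -
  have "int ((nat (x mod int n) + d) mod n) = (int (nat (x mod int n)) + int d) mod int n"
    by (simp add: of_nat_mod)
  also have "\<dots> = (x mod int n + int d) mod int n" using assms by simp
  also have "\<dots> = (x + int d) mod int n" by (simp add: mod_add_left_eq)
  finally show ?thesis by (metis nat_int)
qed
lemma natmod_minus:
  assumes "0 < n" "d \<le> n"
  shows "nat ((x - int d) mod int n) = (nat (x mod int n) + n - d) mod n"
proof -
  have "int ((nat (x mod int n) + n - d) mod n) = (int (nat (x mod int n)) + int n - int d) mod int n"
    using assms by (simp add: of_nat_mod of_nat_diff)
  also have "\<dots> = (x mod int n + int n - int d) mod int n" using assms by simp
  also have "\<dots> = (x mod int n + (int n - int d)) mod int n" by (simp add: algebra_simps)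
  also have "\<dots> = (x + (int n - int d)) mod int n" by (simp add: mod_add_left_eq)
  also have "\<dots> = (x - int d + int n) mod int n" by (simp add: algebra_simps)
  also have "\<dots> = (x - int d) mod int n" by simp
  finally show ?thesis by (metis nat_int)
qed

lemma tpc_nat:
  assumes "3 \<le> n" "0 < k" "k < n" "(2*k) mod n \<noteq> 0"
  shows "total_perfect_code n k C \<longleftrightarrow> C \<subseteq> gp_verts n \<and>
    (\<forall>i<n. ex1 (U ((i+n-1) mod n) \<in> C) (U ((i+1) mod n) \<in> C) (V i \<in> C)) \<and>
    (\<forall>i<n. ex1 (U i \<in> C) (V ((i+n-k) mod n) \<in> C) (V ((i+k) mod n) \<in> C))"
proof -
  have dU: "(i+n-1) mod n \<noteq> (i+1) mod n" if "i < n" for i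
  proof
    assume h: "(i+n-1) mod n = (i+1) mod n"
    have "((i+1) mod n + 1) mod n = i" using pred_mod[OF that] h by simp
    then have "(i + 2) mod n = i" by (simp add: mod_Suc_eq)
    then show False using that assms(1)
    proof (cases "i + 2 < n")
      case True then show ?thesis using \<open>(i + 2) mod n = i\<close> by simp
    next
      case False
      then have "(i + 2) mod n = (i + 2 - n) mod n" by (simp add: le_mod_geq)
      also have "\<dots> = i + 2 - n" using that assms(1) by simp
      finally show ?thesis using \<open>(i + 2) mod n = i\<close> False assms(1) by simp
    qed
  qed
  have dV: "(i+n-k) mod n \<noteq> (i+k) mod n" if "i < n" for i
  proof
    assume h: "(i+n-k) mod n = (i+k) mod n"
    have "((i+k) mod n + k) mod n = i" using predk_mod[OF that, of k] h assms by simp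
    then have "(i + 2*k) mod n = i mod n" using that by (simp add: mod_add_left_eq mult_2 add.assoc)
    then have "(2*k) mod n = 0"
      by (metis mod_eq_dvd_iff_nat le_add1 add_diff_cancel_left' dvd_imp_mod_0)
    then show False using assms by simp
  qed
  have cU: "card {c \<in> C. gp_adj n k (U i) c} = 1 \<longleftrightarrow> ex1 (U ((i+n-1) mod n) \<in> C) (U ((i+1) mod n) \<in> C) (V i \<in> C)"
    if "i < n" for i
  proof -
    have "{c \<in> C. gp_adj n k (U i) c} = {c \<in> C. c = U ((i+n-1) mod n) \<or> c = U ((i+1) mod n) \<or> c = V i}"
      using nbrU[OF assms(1) that] by blast
    moreover have "U ((i+n-1) mod n) \<noteq> U ((i+1) mod n)" using dU[OF that] by simp
    ultimately show ?thesis using card3[of "U ((i+n-1) mod n)" "U ((i+1) mod n)" "V i" C] by simp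
  qed
  have cV: "card {c \<in> C. gp_adj n k (V i) c} = 1 \<longleftrightarrow> ex1 (U i \<in> C) (V ((i+n-k) mod n) \<in> C) (V ((i+k) mod n) \<in> C)"
    if "i < n" for i
  proof -
    have "{c \<in> C. gp_adj n k (V i) c} = {c \<in> C. c = U i \<or> c = V ((i+n-k) mod n) \<or> c = V ((i+k) mod n)}"
      using nbrV[OF assms(3) that] by blast
    moreover have "V ((i+n-k) mod n) \<noteq> V ((i+k) mod n)" using dV[OF that] by simp
    ultimately show ?thesis using card3[of "U i" "V ((i+n-k) mod n)" "V ((i+k) mod n)" C] by simp
  qed
  have gv: "gp_verts n = U ` {..<n} \<union> V ` {..<n}" unfolding gp_verts_def by auto
  show ?thesis unfolding total_perfect_code_def gv using cU cV by auto
qed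

lemma local_window:
  fixes A B :: "int \<Rightarrow> int \<Rightarrow> bool"
  assumes h1: "\<And>s t. ex1 (A (s-1) t) (A (s+1) t) (B s t)"
      and h2: "\<And>s t. ex1 (A s t) (B s (t-1)) (B s (t+1))"
  shows "ex1 (A 0 0) (A 2 0) (A 4 0)"
proof -
  note f = h1[of "-2" "-1"] h2[of "-2" "0"] h1[of "-2" "1"] h1[of "-1" "-2"] h2[of "-1" "-1"]
    h1[of "-1" "0"] h2[of "-1" "1"] h1[of "-1" "2"] h1[of "0" "-1"] h2[of "0" "0"] h1[of "0" "1"]
    h1[of "1" "-2"] h2[of "1" "-1"] h1[of "1" "0"] h2[of "1" "1"] h1[of "1" "2"] h1[of "2" "-1"]
    h2[of "2" "0"] h1[of "2" "1"] h1[of "3" "-2"] h2[of "3" "-1"] h1[of "3" "0"] h2[of "3" "1"] h1[of "3" "2"]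
  from f show ?thesis unfolding ex1_def by simp sat
qed


lemma code_set:
  fixes d n c :: nat
  assumes "0 < d" "d dvd n" "0 < n"
  shows "{(d*i + c) mod n | i. i < n} = {m. m < n \<and> m mod d = c mod d}"
proof (intro set_eqI iffI)
  fix m assume "m \<in> {(d*i + c) mod n | i. i < n}"
  then obtain i where m: "m = (d*i + c) mod n" by blast
  have "m mod d = (d*i + c) mod d" unfolding m by (rule mod_mod_cancel[OF assms(2)])
  also have "\<dots> = c mod d" by simp
  finally show "m \<in> {m. m < n \<and> m mod d = c mod d}" using m assms by simp
next
  fix m assume "m \<in> {m. m < n \<and> m mod d = c mod d}"
  then have mn: "m < n" and mc: "m mod d = c mod d" by auto
  obtain q where nq: "n = d * q" using assms by blast
  have qpos: "0 < q" using nq assms by simp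
  have "int m mod int d = int c mod int d" using mc by (metis of_nat_mod)
  then have "int d dvd (int m - int c)" using mod_eq_dvd_iff by blast
  then obtain t where t: "int m - int c = int d * t" by blast
  define i where "i = nat (t mod int q)"
  have ii: "int i = t mod int q" unfolding i_def using qpos by simp
  have "int i < int q" using ii qpos by simp
  then have "i < q" by simp
  moreover have "q \<le> n" unfolding nq using assms(1) by simp
  ultimately have iln: "i < n" by simp
  have tm: "t mod int q = t - int q * (t div int q)" by (simp add: minus_mult_div_eq_mod)
  have e1: "int d * int i = int d * t - int d * int q * (t div int q)"
    unfolding ii tm by (simp add: right_diff_distrib mult.assoc)
  have e2: "int n * (t div int q) = int d * int q * (t div int q)" by (simp add: nq)
  have "int d * int i + int c = int m + int n * (- (t div int q))"
    using e1 e2 t by linarith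
  then have "int ((d*i + c) mod n) = (int m + int n * (- (t div int q))) mod int n"
    by (simp add: of_nat_mod)
  also have "\<dots> = int m mod int n" by (rule mod_mult_self2)
  also have "\<dots> = int m" using mn by simp
  finally have "(d*i + c) mod n = m" by simp
  then show "m \<in> {(d*i + c) mod n | i. i < n}" using iln by blast
qed
lemma per_nat:
  assumes "\<And>x. \<alpha> (x + 6) = (\<alpha> :: int \<Rightarrow> bool) x"
  shows "\<alpha> (x + 6 * int m) = \<alpha> x"
proof (induction m)
  case 0 then show ?case by simp
next
  case (Suc m)
  have "\<alpha> (x + 6 * int (Suc m)) = \<alpha> (x + 6 * int m + 6)" by (simp add: algebra_simps)
  also have "\<dots> = \<alpha> (x + 6 * int m)" by (rule assms)
  finally show ?case using Suc by simp
qed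

lemma per_int:
  assumes "\<And>x. \<alpha> (x + 6) = (\<alpha> :: int \<Rightarrow> bool) x"
  shows "\<alpha> (x + 6 * m) = \<alpha> x"
proof (cases "m \<ge> 0")
  case True
  have "\<alpha> (x + 6 * int (nat m)) = \<alpha> x" by (rule per_nat) (rule assms)
  then show ?thesis using True by simp
next
  case False
  have "\<alpha> (x + 6 * m + 6 * int (nat (-m))) = \<alpha> (x + 6 * m)" by (rule per_nat) (rule assms)
  moreover have "x + 6 * m + 6 * int (nat (-m)) = x" using False by simp
  ultimately show ?thesis by simp
qed

lemma per_mod:
  assumes "\<And>x. \<alpha> (x + 6) = (\<alpha> :: int \<Rightarrow> bool) x"
  shows "\<alpha> x = \<alpha> (x mod 6)"
proof -
  have "\<alpha> (x mod 6 + 6 * (x div 6)) = \<alpha> (x mod 6)" by (rule per_int) (rule assms)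
  then show ?thesis by simp
qed

definition pat3 :: "(int \<Rightarrow> bool) \<Rightarrow> int \<Rightarrow> bool" where
  "pat3 \<alpha> j \<longleftrightarrow> (\<forall>p\<in>{0,1,2,3,4,5}. \<alpha> p \<longleftrightarrow> p mod 3 = j)"
definition pat6 :: "(int \<Rightarrow> bool) \<Rightarrow> int \<Rightarrow> bool" where
  "pat6 \<alpha> j \<longleftrightarrow> (\<forall>p\<in>{0,1,2,3,4,5}. \<alpha> p \<longleftrightarrow> (p - j) mod 6 = 0 \<or> (p - j) mod 6 = 1)"

lemma classify:
  fixes \<alpha> :: "int \<Rightarrow> bool" and r kk :: int
  assumes L1: "\<And>x. ex1 (\<alpha> x) (\<alpha> (x+2)) (\<alpha> (x+4))"
    and Pr: "\<And>x. \<alpha> (x + r) = \<alpha> x" and r: "0 \<le> r" "r < 6"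
    and K: "\<And>x. ex1 (\<alpha> x) (\<alpha> (x+3-kk)) (\<alpha> (x+3+kk))" and kk: "0 \<le> kk" "kk < 6"
  shows "(r mod 3 = 0 \<and> kk mod 3 \<noteq> 0 \<and> (\<exists>j\<in>{0,1,2}. pat3 \<alpha> j)) \<or>
         (r = 0 \<and> (kk = 1 \<or> kk = 5) \<and> (\<exists>j\<in>{0,1,2,3,4,5}. pat6 \<alpha> j))"
proof -
  have P6: "\<alpha> (x + 6) = \<alpha> x" for x
    using L1[of x] L1[of "x+2"] by (simp add: ex1_def add.assoc) blast
  note per = per_mod[of \<alpha>, OF P6]
  note pers = per[of 6, simplified] per[of 7, simplified] per[of 8, simplified] per[of 9, simplified]
    per[of 10, simplified] per[of 11, simplified] per[of 12, simplified] per[of 13, simplified]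
    per[of "-1", simplified] per[of "-2", simplified] per[of "-3", simplified]
  have rr: "r \<in> {0,1,2,3,4,5}" "kk \<in> {0,1,2,3,4,5}" using r kk by auto
  note F = L1[of 0] L1[of 1] Pr[of 0] Pr[of 1] Pr[of 2] Pr[of 3] Pr[of 4] Pr[of 5]
    K[of 0] K[of 1] K[of 2] K[of 3] K[of 4] K[of 5]
  from rr F show ?thesis
    apply (simp only: insert_iff empty_iff simp_thms)
    apply (elim disjE)
    apply (simp_all add: pers ex1_def pat3_def pat6_def)
    apply (sat+)?
    done
qed


definition al :: "nat \<Rightarrow> gpv set \<Rightarrow> int \<Rightarrow> bool" where
  "al n C x \<longleftrightarrow> U (nat (x mod int n)) \<in> C"
definition be :: "nat \<Rightarrow> gpv set \<Rightarrow> int \<Rightarrow> bool" where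
  "be n C x \<longleftrightarrow> V (nat (x mod int n)) \<in> C"

lemma tpc_int:
  assumes "3 \<le> n" "0 < k" "k < n" "(2*k) mod n \<noteq> 0" "C \<subseteq> gp_verts n"
  shows "total_perfect_code n k C \<longleftrightarrow>
    (\<forall>x. ex1 (al n C (x-1)) (al n C (x+1)) (be n C x)) \<and>
    (\<forall>x. ex1 (al n C x) (be n C (x - int k)) (be n C (x + int k)))"
proof -
  have n0: "0 < n" using assms by simp
  have a0: "al n C x \<longleftrightarrow> U (nat (x mod int n)) \<in> C" for x unfolding al_def by simp
  have am: "al n C (x - 1) \<longleftrightarrow> U ((nat (x mod int n) + n - 1) mod n) \<in> C" for x
    using natmod_minus[OF n0, of 1 x] n0 unfolding al_def by simp
  have ap: "al n C (x + 1) \<longleftrightarrow> U ((nat (x mod int n) + 1) mod n) \<in> C" for x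
    using natmod_plus[OF n0, of x 1] unfolding al_def by simp
  have b0: "be n C x \<longleftrightarrow> V (nat (x mod int n)) \<in> C" for x unfolding be_def by simp
  have bm: "be n C (x - int k) \<longleftrightarrow> V ((nat (x mod int n) + n - k) mod n) \<in> C" for x
    using natmod_minus[OF n0, of k x] assms(3) unfolding be_def by simp
  have bp: "be n C (x + int k) \<longleftrightarrow> V ((nat (x mod int n) + k) mod n) \<in> C" for x
    using natmod_plus[OF n0, of x k] unfolding be_def by simp
  have lt: "nat (x mod int n) < n" for x using n0
    by (metis Euclidean_Rings.pos_mod_bound Euclidean_Rings.pos_mod_sign nat_less_iff of_nat_0_less_iff)
  have ni: "nat (int i mod int n) = i" if "i < n" for i using that
    by (metis mod_less nat_int of_nat_mod)
  show ?thesis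
    unfolding tpc_nat[OF assms(1-4)]
  proof safe
    fix x
    assume "\<forall>i<n. ex1 (U ((i + n - 1) mod n) \<in> C) (U ((i + 1) mod n) \<in> C) (V i \<in> C)"
    then show "ex1 (al n C (x - 1)) (al n C (x + 1)) (be n C x)"
      using lt[of x] am ap b0 by simp
  next
    fix x
    assume "\<forall>i<n. ex1 (U i \<in> C) (V ((i + n - k) mod n) \<in> C) (V ((i + k) mod n) \<in> C)"
    then show "ex1 (al n C x) (be n C (x - int k)) (be n C (x + int k))"
      using lt[of x] a0 bm bp by simp
  next
    fix i assume A: "i < n" and B: "\<forall>x. ex1 (al n C (x - 1)) (al n C (x + 1)) (be n C x)"
    have "ex1 (al n C (int i - 1)) (al n C (int i + 1)) (be n C (int i))" using B by blast
    then show "ex1 (U ((i + n - 1) mod n) \<in> C) (U ((i + 1) mod n) \<in> C) (V i \<in> C)"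
      using am[of "int i"] ap[of "int i"] b0[of "int i"] ni[OF A] by simp
  next
    fix i assume A: "i < n" and B: "\<forall>x. ex1 (al n C x) (be n C (x - int k)) (be n C (x + int k))"
    have "ex1 (al n C (int i)) (be n C (int i - int k)) (be n C (int i + int k))" using B by blast
    then show "ex1 (U i \<in> C) (V ((i + n - k) mod n) \<in> C) (V ((i + k) mod n) \<in> C)"
      using a0[of "int i"] bm[of "int i"] bp[of "int i"] ni[OF A] by simp
  qed (use assms in auto)
qed


lemma mod_nat_int:
  assumes "0 < n" "d dvd n"
  shows "int (nat (x mod int n) mod d) = x mod int d"
proof -
  have "int (nat (x mod int n) mod d) = (x mod int n) mod int d"
    using assms by (simp add: of_nat_mod)
  also have "\<dots> = x mod int d"
    by (rule mod_mod_cancel) (simp add: assms)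
  finally show ?thesis .
qed

lemma memU_al:
  assumes "C \<subseteq> gp_verts n"
  shows "U m \<in> C \<longleftrightarrow> m < n \<and> al n C (int m)"
proof -
  have "U m \<in> C \<Longrightarrow> m < n" using assms unfolding gp_verts_def by auto
  moreover have "m < n \<Longrightarrow> al n C (int m) \<longleftrightarrow> U m \<in> C"
    unfolding al_def by (metis mod_less nat_int of_nat_mod)
  ultimately show ?thesis by blast
qed

lemma memV_be:
  assumes "C \<subseteq> gp_verts n"
  shows "V m \<in> C \<longleftrightarrow> m < n \<and> be n C (int m)"
proof -
  have "V m \<in> C \<Longrightarrow> m < n" using assms unfolding gp_verts_def by auto
  moreover have "m < n \<Longrightarrow> be n C (int m) \<longleftrightarrow> V m \<in> C"
    unfolding be_def by (metis mod_less nat_int of_nat_mod)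
  ultimately show ?thesis by blast
qed

lemma memU_C:
  assumes "0 < n" "3 dvd n"
  shows "U m \<in> code_C n j \<longleftrightarrow> m < n \<and> m mod 3 = j mod 3"
proof -
  have "U m \<in> code_C n j \<longleftrightarrow> m \<in> {(3*i + j) mod n | i. i < n}" unfolding code_C_def by auto
  then show ?thesis using code_set[of 3 n j] assms by simp
qed

lemma memV_C:
  assumes "0 < n" "3 dvd n"
  shows "V m \<in> code_C n j \<longleftrightarrow> m < n \<and> m mod 3 = j mod 3"
proof -
  have "V m \<in> code_C n j \<longleftrightarrow> m \<in> {(3*i + j) mod n | i. i < n}" unfolding code_C_def by auto
  then show ?thesis using code_set[of 3 n j] assms by simp
qed

lemma memU_C':
  assumes "0 < n" "6 dvd n"
  shows "U m \<in> code_C' n j \<longleftrightarrow> m < n \<and> (m mod 6 = j mod 6 \<or> m mod 6 = (j+1) mod 6)"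
proof -
  have "U m \<in> code_C' n j \<longleftrightarrow> m \<in> {(6*i + j) mod n | i. i < n} \<or> m \<in> {(6*i + (j+1)) mod n | i. i < n}"
    unfolding code_C'_def by (auto simp: add.assoc)
  then show ?thesis using code_set[of 6 n j] code_set[of 6 n "j+1"] assms by auto
qed

lemma memV_C':
  assumes "0 < n" "6 dvd n"
  shows "V m \<in> code_C' n j \<longleftrightarrow> m < n \<and> (m mod 6 = (j+3) mod 6 \<or> m mod 6 = (j+4) mod 6)"
proof -
  have "V m \<in> code_C' n j \<longleftrightarrow> m \<in> {(6*i + (j+3)) mod n | i. i < n} \<or> m \<in> {(6*i + (j+4)) mod n | i. i < n}"
    unfolding code_C'_def by (auto simp: add.assoc)
  then show ?thesis using code_set[of 6 n "j+3"] code_set[of 6 n "j+4"] assms by auto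
qed

lemma nat_mod_lt: "0 < n \<Longrightarrow> nat (x mod int n) < n"
  by (metis Euclidean_Rings.pos_mod_bound Euclidean_Rings.pos_mod_sign nat_less_iff of_nat_0_less_iff)

lemma al_C:
  assumes "0 < n" "3 dvd n" "j < 3"
  shows "al n (code_C n j) x \<longleftrightarrow> x mod 3 = int j"
proof -
  have "al n (code_C n j) x \<longleftrightarrow> nat (x mod int n) mod 3 = j"
    unfolding al_def using memU_C[OF assms(1,2)] nat_mod_lt[OF assms(1)] assms(3) by simp
  also have "\<dots> \<longleftrightarrow> int (nat (x mod int n) mod 3) = int j" by linarith
  also have "\<dots> \<longleftrightarrow> x mod 3 = int j" using mod_nat_int[OF assms(1,2), of x] by simp
  finally show ?thesis .
qed

lemma be_C:
  assumes "0 < n" "3 dvd n" "j < 3"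
  shows "be n (code_C n j) x \<longleftrightarrow> x mod 3 = int j"
proof -
  have "be n (code_C n j) x \<longleftrightarrow> nat (x mod int n) mod 3 = j"
    unfolding be_def using memV_C[OF assms(1,2)] nat_mod_lt[OF assms(1)] assms(3) by simp
  also have "\<dots> \<longleftrightarrow> int (nat (x mod int n) mod 3) = int j" by linarith
  also have "\<dots> \<longleftrightarrow> x mod 3 = int j" using mod_nat_int[OF assms(1,2), of x] by simp
  finally show ?thesis .
qed

lemma al_C':
  assumes "0 < n" "6 dvd n" "j < 6"
  shows "al n (code_C' n j) x \<longleftrightarrow> x mod 6 = int j \<or> x mod 6 = int ((j+1) mod 6)"
proof -
  have "al n (code_C' n j) x \<longleftrightarrow> nat (x mod int n) mod 6 = j \<or> nat (x mod int n) mod 6 = (j+1) mod 6"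
    unfolding al_def using memU_C'[OF assms(1,2)] nat_mod_lt[OF assms(1)] assms(3) by simp
  also have "\<dots> \<longleftrightarrow> int (nat (x mod int n) mod 6) = int j \<or> int (nat (x mod int n) mod 6) = int ((j+1) mod 6)"
    by linarith
  also have "\<dots> \<longleftrightarrow> x mod 6 = int j \<or> x mod 6 = int ((j+1) mod 6)" using mod_nat_int[OF assms(1,2), of x] by simp
  finally show ?thesis .
qed

lemma be_C':
  assumes "0 < n" "6 dvd n" "j < 6"
  shows "be n (code_C' n j) x \<longleftrightarrow> x mod 6 = int ((j+3) mod 6) \<or> x mod 6 = int ((j+4) mod 6)"
proof -
  have "be n (code_C' n j) x \<longleftrightarrow> nat (x mod int n) mod 6 = (j+3) mod 6 \<or> nat (x mod int n) mod 6 = (j+4) mod 6"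
    unfolding be_def using memV_C'[OF assms(1,2)] nat_mod_lt[OF assms(1)] by simp
  also have "\<dots> \<longleftrightarrow> int (nat (x mod int n) mod 6) = int ((j+3) mod 6) \<or> int (nat (x mod int n) mod 6) = int ((j+4) mod 6)"
    by linarith
  also have "\<dots> \<longleftrightarrow> x mod 6 = int ((j+3) mod 6) \<or> x mod 6 = int ((j+4) mod 6)" using mod_nat_int[OF assms(1,2), of x] by simp
  finally show ?thesis .
qed

lemma fin6: "(0::int) \<le> p \<Longrightarrow> p < 6 \<Longrightarrow> p = 0 \<or> p = 1 \<or> p = 2 \<or> p = 3 \<or> p = 4 \<or> p = 5" by arith

lemma conv3:
  fixes J K :: int
  assumes "0 \<le> J" "J < 3" "K mod 3 \<noteq> 0"
  shows "ex1 ((x-1) mod 3 = J) ((x+1) mod 3 = J) (x mod 3 = J)"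
    and "ex1 (x mod 3 = J) ((x-K) mod 3 = J) ((x+K) mod 3 = J)"
proof -
  have e1: "(x-1) mod 3 = (x mod 3 - 1) mod 3" by (simp add: mod_diff_left_eq)
  have e2: "(x+1) mod 3 = (x mod 3 + 1) mod 3" by (simp add: mod_add_left_eq)
  have e3: "(x-K) mod 3 = (x mod 3 - K mod 3) mod 3" by (simp add: mod_diff_eq)
  have e4: "(x+K) mod 3 = (x mod 3 + K mod 3) mod 3" by (simp add: mod_add_eq)
  note e = e1 e2 e3 e4
  have p: "x mod 3 = 0 \<or> x mod 3 = 1 \<or> x mod 3 = 2" by arith
  have k: "K mod 3 = 1 \<or> K mod 3 = 2" using assms(3) by arith
  have j: "J = 0 \<or> J = 1 \<or> J = 2" using assms(1,2) by arith
  show "ex1 ((x-1) mod 3 = J) ((x+1) mod 3 = J) (x mod 3 = J)"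
    unfolding e using p j by (elim disjE) (simp_all add: ex1_def)
  show "ex1 (x mod 3 = J) ((x-K) mod 3 = J) ((x+K) mod 3 = J)"
    unfolding e using p j k by (elim disjE) (simp_all add: ex1_def)
qed

lemma conv6:
  fixes J K :: int
  assumes "0 \<le> J" "J < 6" "K mod 6 = 1 \<or> K mod 6 = 5"
  shows "ex1 ((x-1) mod 6 = J \<or> (x-1) mod 6 = (J+1) mod 6) ((x+1) mod 6 = J \<or> (x+1) mod 6 = (J+1) mod 6)
             (x mod 6 = (J+3) mod 6 \<or> x mod 6 = (J+4) mod 6)"
    and "ex1 (x mod 6 = J \<or> x mod 6 = (J+1) mod 6) ((x-K) mod 6 = (J+3) mod 6 \<or> (x-K) mod 6 = (J+4) mod 6)
             ((x+K) mod 6 = (J+3) mod 6 \<or> (x+K) mod 6 = (J+4) mod 6)"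
proof -
  have e1: "(x-1) mod 6 = (x mod 6 - 1) mod 6" by (simp add: mod_diff_left_eq)
  have e2: "(x+1) mod 6 = (x mod 6 + 1) mod 6" by (simp add: mod_add_left_eq)
  have e3: "(x-K) mod 6 = (x mod 6 - K mod 6) mod 6" by (simp add: mod_diff_eq)
  have e4: "(x+K) mod 6 = (x mod 6 + K mod 6) mod 6" by (simp add: mod_add_eq)
  note e = e1 e2 e3 e4
  have p: "x mod 6 = 0 \<or> x mod 6 = 1 \<or> x mod 6 = 2 \<or> x mod 6 = 3 \<or> x mod 6 = 4 \<or> x mod 6 = 5"
    by (rule fin6) simp_all
  have j: "J = 0 \<or> J = 1 \<or> J = 2 \<or> J = 3 \<or> J = 4 \<or> J = 5" using assms(1,2) by (rule fin6)
  show "ex1 ((x-1) mod 6 = J \<or> (x-1) mod 6 = (J+1) mod 6) ((x+1) mod 6 = J \<or> (x+1) mod 6 = (J+1) mod 6)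
             (x mod 6 = (J+3) mod 6 \<or> x mod 6 = (J+4) mod 6)"
    unfolding e using p j by (elim disjE) (simp_all add: ex1_def)
  show "ex1 (x mod 6 = J \<or> x mod 6 = (J+1) mod 6) ((x-K) mod 6 = (J+3) mod 6 \<or> (x-K) mod 6 = (J+4) mod 6)
             ((x+K) mod 6 = (J+3) mod 6 \<or> (x+K) mod 6 = (J+4) mod 6)"
    unfolding e using p j assms(3) by (elim disjE) (simp_all add: ex1_def)
qed

lemma fin6n: "(p::nat) < 6 \<Longrightarrow> p = 0 \<or> p = 1 \<or> p = 2 \<or> p = 3 \<or> p = 4 \<or> p = 5" by arith

lemma modj:
  assumes "0 \<le> j" "j < int d"
  shows "int m mod int d = j \<longleftrightarrow> m mod d = nat j mod d"
proof -
  have "nat j mod d = nat j" using assms by simp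
  moreover have "int m mod int d = int (m mod d)" by (simp add: zmod_int)
  ultimately show ?thesis using assms by auto
qed

lemma pat6_U:
  assumes "j \<in> {0,1,2,3,4,5::int}"
  shows "((int m - j) mod 6 = 0 \<or> (int m - j) mod 6 = 1) \<longleftrightarrow> (m mod 6 = nat j mod 6 \<or> m mod 6 = (nat j + 1) mod 6)"
proof -
  have e: "(int m - j) mod 6 = (int (m mod 6) - j) mod 6" by (simp add: zmod_int mod_diff_left_eq)
  have "m mod 6 < 6" by simp
  then have p: "m mod 6 = 0 \<or> m mod 6 = 1 \<or> m mod 6 = 2 \<or> m mod 6 = 3 \<or> m mod 6 = 4 \<or> m mod 6 = 5" by (rule fin6n)
  from assms have "j = 0 \<or> j = 1 \<or> j = 2 \<or> j = 3 \<or> j = 4 \<or> j = 5" by simp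
  then show ?thesis unfolding e using p by (elim disjE) simp_all
qed

lemma pat6_V:
  assumes "j \<in> {0,1,2,3,4,5::int}"
  shows "((int m + 3 - j) mod 6 = 0 \<or> (int m + 3 - j) mod 6 = 1) \<longleftrightarrow> (m mod 6 = (nat j + 3) mod 6 \<or> m mod 6 = (nat j + 4) mod 6)"
proof -
  have e0: "int (m mod 6) = int m mod 6" by (simp add: zmod_int)
  have "(int m + 3 - j) mod 6 = (int m + (3 - j)) mod 6" by (simp add: algebra_simps)
  also have "\<dots> = (int m mod 6 + (3 - j)) mod 6" by (simp add: mod_add_left_eq)
  also have "\<dots> = (int (m mod 6) + (3 - j)) mod 6" unfolding e0 ..
  finally have e: "(int m + 3 - j) mod 6 = (int (m mod 6) + 3 - j) mod 6" by (simp add: algebra_simps)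
  have "m mod 6 < 6" by simp
  then have p: "m mod 6 = 0 \<or> m mod 6 = 1 \<or> m mod 6 = 2 \<or> m mod 6 = 3 \<or> m mod 6 = 4 \<or> m mod 6 = 5" by (rule fin6n)
  from assms have "j = 0 \<or> j = 1 \<or> j = 2 \<or> j = 3 \<or> j = 4 \<or> j = 5" by simp
  then show ?thesis unfolding e using p by (elim disjE) simp_all
qed

lemma thm_fwd:
  fixes n k :: nat and C :: "gpv set"
  assumes "n \<ge> 3" and "0 < k" and "k < n" and "(2 * k) mod n \<noteq> 0"
    and "C \<subseteq> gp_verts n"
    and T: "total_perfect_code n k C"
  shows "((n mod 3 = 0 \<and> k mod 3 \<noteq> 0 \<and> (\<exists>j<3. C = code_C n j)) \<or>
     (n mod 6 = 0 \<and> (k mod 6 = 1 \<or> k mod 6 = 5) \<and> (\<exists>j<6. C = code_C' n j)))"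
proof -
  have n0: "0 < n" using assms(1) by simp
  note TI = tpc_int[OF assms(1-5)]
  then have H1: "\<And>x. ex1 (al n C (x-1)) (al n C (x+1)) (be n C x)"
    and H2: "\<And>x. ex1 (al n C x) (be n C (x - int k)) (be n C (x + int k))" using TI T by auto
  have L1: "ex1 (al n C x) (al n C (x+2)) (al n C (x+4))" for x
  proof -
    have h1: "ex1 (al n C (x + (s-1) + t*int k)) (al n C (x + (s+1) + t*int k)) (be n C (x + s + t*int k))" for s t
    proof -
      have e: "x + (s-1) + t*int k = (x + s + t*int k) - 1" "x + (s+1) + t*int k = (x + s + t*int k) + 1" by simp_all
      show ?thesis unfolding e by (rule H1)
    qed
    have h2: "ex1 (al n C (x + s + t*int k)) (be n C (x + s + (t-1)*int k)) (be n C (x + s + (t+1)*int k))" for s t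
    proof -
      have e: "x + s + (t-1)*int k = (x + s + t*int k) - int k" "x + s + (t+1)*int k = (x + s + t*int k) + int k"
        by (simp_all add: algebra_simps)
      show ?thesis unfolding e by (rule H2)
    qed
    have "ex1 (al n C (x + 0 + 0*int k)) (al n C (x + 2 + 0*int k)) (al n C (x + 4 + 0*int k))"
      using local_window[where A="\<lambda>s t. al n C (x + s + t*int k)" and B="\<lambda>s t. be n C (x + s + t*int k)", OF h1 h2]
      by simp
    then show ?thesis by simp
  qed
  have P6: "al n C (x + 6) = al n C x" for x
    using L1[of x] L1[of "x+2"] by (simp add: ex1_def add.assoc) blast
  have Bx: "be n C x = al n C (x + 3)" for x
  proof -
    have e: "x - 1 + 2 = x + 1" "x - 1 + 4 = x + 3" by simp_all
    have "ex1 (al n C (x - 1)) (al n C (x - 1 + 2)) (al n C (x - 1 + 4))" by (rule L1)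
    then have "ex1 (al n C (x - 1)) (al n C (x + 1)) (al n C (x + 3))" unfolding e .
    then show ?thesis using H1[of x] unfolding ex1_def by blast
  qed
  have per: "al n C (x + 6 * m) = al n C x" for x m by (rule per_int) (rule P6)
  have perm: "al n C x = al n C (x mod 6)" for x by (rule per_mod) (rule P6)
  have Pn: "al n C (x + int n) = al n C x" for x unfolding al_def by simp
  define r where "r = int (n mod 6)"
  define kk where "kk = int (k mod 6)"
  have nr: "int n = r + 6 * int (n div 6)" unfolding r_def
    by (metis mod_mult_div_eq of_nat_add of_nat_mult of_nat_numeral)
  have kr: "int k = kk + 6 * int (k div 6)" unfolding kk_def
    by (metis mod_mult_div_eq of_nat_add of_nat_mult of_nat_numeral)
  have Pr: "al n C (x + r) = al n C x" for x
  proof -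
    have "al n C (x + int n) = al n C (x + r + 6 * int (n div 6))" by (simp add: nr add.assoc)
    then show ?thesis using Pn per by simp
  qed
  have K: "ex1 (al n C x) (al n C (x+3-kk)) (al n C (x+3+kk))" for x
  proof -
    have "be n C (x - int k) = al n C (x - int k + 3)" by (rule Bx)
    also have "x - int k + 3 = (x+3-kk) + 6 * (- int (k div 6))" by (simp add: kr algebra_simps)
    also have "al n C ((x+3-kk) + 6 * (- int (k div 6))) = al n C (x+3-kk)" by (rule per)
    finally have 1: "be n C (x - int k) = al n C (x+3-kk)" .
    have "be n C (x + int k) = al n C (x + int k + 3)" by (rule Bx)
    also have "x + int k + 3 = (x+3+kk) + 6 * int (k div 6)" by (simp add: kr algebra_simps)
    also have "al n C ((x+3+kk) + 6 * int (k div 6)) = al n C (x+3+kk)" by (rule per)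
    finally have 2: "be n C (x + int k) = al n C (x+3+kk)" .
    show ?thesis using H2[of x] 1 2 by simp
  qed
  have r06: "0 \<le> r" "r < 6" unfolding r_def by simp_all
  have k06: "0 \<le> kk" "kk < 6" unfolding kk_def by simp_all
  have m6: "x mod 6 \<in> {0,1,2,3,4,5}" for x :: int
    using fin6[of "x mod 6"] by simp
  have n3: "n mod 3 = 0" if "r mod 3 = 0"
  proof -
    have "int ((n mod 6) mod 3) = 0" using that unfolding r_def by (simp add: of_nat_mod)
    then show ?thesis by (simp add: mod_mod_cancel)
  qed
  have k3: "k mod 3 \<noteq> 0" if "kk mod 3 \<noteq> 0"
  proof -
    have "int ((k mod 6) mod 3) \<noteq> 0" using that unfolding kk_def by (simp add: of_nat_mod)
    then show ?thesis by (simp add: mod_mod_cancel)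
  qed
  have cl: "(r mod 3 = 0 \<and> kk mod 3 \<noteq> 0 \<and> (\<exists>j\<in>{0,1,2}. pat3 (al n C) j)) \<or>
       (r = 0 \<and> (kk = 1 \<or> kk = 5) \<and> (\<exists>j\<in>{0,1,2,3,4,5}. pat6 (al n C) j))"
    by (rule classify[OF L1 Pr r06 K k06])
  then show "(n mod 3 = 0 \<and> k mod 3 \<noteq> 0 \<and> (\<exists>j<3. C = code_C n j)) \<or>
   (n mod 6 = 0 \<and> (k mod 6 = 1 \<or> k mod 6 = 5) \<and> (\<exists>j<6. C = code_C' n j))"
  proof (rule disjE)
    assume H: "r mod 3 = 0 \<and> kk mod 3 \<noteq> 0 \<and> (\<exists>j\<in>{0,1,2}. pat3 (al n C) j)"
    note r3 = conjunct1[OF H] and kk3 = conjunct1[OF conjunct2[OF H]]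
    obtain j where j: "j \<in> {0,1,2}" and pj: "pat3 (al n C) j"
      using conjunct2[OF conjunct2[OF H]] by (rule bexE)
    have A: "al n C x \<longleftrightarrow> x mod 3 = j" for x
    proof -
      have "al n C (x mod 6) \<longleftrightarrow> (x mod 6) mod 3 = j"
        using bspec[OF pj[unfolded pat3_def] m6[of x]] .
      moreover have "(x mod 6) mod 3 = x mod 3" by (simp add: mod_mod_cancel)
      ultimately show ?thesis using perm[of x] by simp
    qed
    have nn3: "n mod 3 = 0" by (rule n3[OF r3])
    then have "3 dvd n" by auto
    have "C = code_C n (nat j)"
    proof (rule set_eqI)
      fix z show "z \<in> C \<longleftrightarrow> z \<in> code_C n (nat j)"
      proof (cases z)
        case (U m)
        have j03: "0 \<le> j" "j < int 3" using j by auto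
        have "int m mod 3 = j \<longleftrightarrow> m mod 3 = nat j mod 3" using modj[OF j03, of m] by simp
        then show ?thesis unfolding U memU_al[OF assms(5)] memU_C[OF n0 \<open>3 dvd n\<close>] A by simp
      next
        case (V m)
        have j03: "0 \<le> j" "j < int 3" using j by auto
        have "(int m + 3) mod 3 = int m mod 3" by simp
        then have "(int m + 3) mod 3 = j \<longleftrightarrow> m mod 3 = nat j mod 3" using modj[OF j03, of m] by simp
        then show ?thesis unfolding V memV_be[OF assms(5)] memV_C[OF n0 \<open>3 dvd n\<close>] Bx A by simp
      qed
    qed
    moreover have "nat j < 3" using j by auto
    ultimately show ?thesis using nn3 k3[OF kk3] by blast
  next
    assume H: "r = 0 \<and> (kk = 1 \<or> kk = 5) \<and> (\<exists>j\<in>{0,1,2,3,4,5}. pat6 (al n C) j)"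
    note r0 = conjunct1[OF H] and kk15 = conjunct1[OF conjunct2[OF H]]
    obtain j where j: "j \<in> {0,1,2,3,4,5}" and pj: "pat6 (al n C) j"
      using conjunct2[OF conjunct2[OF H]] by (rule bexE)
    have A: "al n C x \<longleftrightarrow> (x - j) mod 6 = 0 \<or> (x - j) mod 6 = 1" for x
    proof -
      have "al n C (x mod 6) \<longleftrightarrow> (x mod 6 - j) mod 6 = 0 \<or> (x mod 6 - j) mod 6 = 1"
        using bspec[OF pj[unfolded pat6_def] m6[of x]] .
      moreover have "(x mod 6 - j) mod 6 = (x - j) mod 6" by (simp add: mod_diff_left_eq)
      ultimately show ?thesis using perm[of x] by simp
    qed
    have nn6: "n mod 6 = 0" using r0 unfolding r_def by simp
    then have "6 dvd n" by auto
    have "C = code_C' n (nat j)"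
    proof (rule set_eqI)
      fix z show "z \<in> C \<longleftrightarrow> z \<in> code_C' n (nat j)"
      proof (cases z)
        case (U m)
        have "((int m - j) mod 6 = 0 \<or> (int m - j) mod 6 = 1) \<longleftrightarrow>
              (m mod 6 = nat j mod 6 \<or> m mod 6 = (nat j + 1) mod 6)"
          using pat6_U[OF j] .
        then show ?thesis unfolding U memU_al[OF assms(5)] memU_C'[OF n0 \<open>6 dvd n\<close>] A by simp
      next
        case (V m)
        have "((int m + 3 - j) mod 6 = 0 \<or> (int m + 3 - j) mod 6 = 1) \<longleftrightarrow>
              (m mod 6 = (nat j + 3) mod 6 \<or> m mod 6 = (nat j + 4) mod 6)"
          using pat6_V[OF j] .
        then show ?thesis unfolding V memV_be[OF assms(5)] memV_C'[OF n0 \<open>6 dvd n\<close>] Bx A by simp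
      qed
    qed
    moreover have "nat j < 6" using j by auto
    moreover have "k mod 6 = 1 \<or> k mod 6 = 5" using kk15 unfolding kk_def by auto
    ultimately show ?thesis using nn6 by blast
  qed
qed

lemma thm_bwd:
  fixes n k :: nat and C :: "gpv set"
  assumes "n \<ge> 3" and "0 < k" and "k < n" and "(2 * k) mod n \<noteq> 0"
    and "C \<subseteq> gp_verts n"
    and D: "((n mod 3 = 0 \<and> k mod 3 \<noteq> 0 \<and> (\<exists>j<3. C = code_C n j)) \<or>
     (n mod 6 = 0 \<and> (k mod 6 = 1 \<or> k mod 6 = 5) \<and> (\<exists>j<6. C = code_C' n j)))"
  shows "total_perfect_code n k C"
proof -
  have n0: "0 < n" using assms(1) by simp
  note TI = tpc_int[OF assms(1-5)]
  show "total_perfect_code n k C"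
    using D
  proof (rule disjE)
    assume H: "n mod 3 = 0 \<and> k mod 3 \<noteq> 0 \<and> (\<exists>j<3. C = code_C n j)"
    note n3 = conjunct1[OF H] and k3 = conjunct1[OF conjunct2[OF H]]
    obtain j where j: "j < 3 \<and> C = code_C n j" using conjunct2[OF conjunct2[OF H]] by (rule exE)
    have "3 dvd n" using n3 by auto
    have "int k mod 3 = int (k mod 3)" by (simp add: zmod_int)
    then have K3: "int k mod 3 \<noteq> 0" using k3 by simp
    have aC: "al n C x \<longleftrightarrow> x mod 3 = int j" "be n C x \<longleftrightarrow> x mod 3 = int j" for x
      using j al_C[OF n0 \<open>3 dvd n\<close>] be_C[OF n0 \<open>3 dvd n\<close>] by auto
    have "(\<forall>x. ex1 (al n C (x-1)) (al n C (x+1)) (be n C x)) \<and> (\<forall>x. ex1 (al n C x) (be n C (x - int k)) (be n C (x + int k)))"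
      unfolding aC using conv3[of "int j" "int k"] j K3 by simp
    then show ?thesis using TI by blast
  next
    assume H: "n mod 6 = 0 \<and> (k mod 6 = 1 \<or> k mod 6 = 5) \<and> (\<exists>j<6. C = code_C' n j)"
    note n6 = conjunct1[OF H] and k6 = conjunct1[OF conjunct2[OF H]]
    obtain j where j: "j < 6 \<and> C = code_C' n j" using conjunct2[OF conjunct2[OF H]] by (rule exE)
    have "6 dvd n" using n6 by auto
    have "int k mod 6 = int (k mod 6)" by (simp add: zmod_int)
    then have K6: "int k mod 6 = 1 \<or> int k mod 6 = 5" using k6 by auto
    have e: "int ((j+1) mod 6) = (int j + 1) mod 6" "int ((j+3) mod 6) = (int j + 3) mod 6"
      "int ((j+4) mod 6) = (int j + 4) mod 6" by (simp_all add: zmod_int add.commute)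
    have aC: "al n C x \<longleftrightarrow> x mod 6 = int j \<or> x mod 6 = (int j + 1) mod 6"
       "be n C x \<longleftrightarrow> x mod 6 = (int j + 3) mod 6 \<or> x mod 6 = (int j + 4) mod 6" for x
      using j al_C'[OF n0 \<open>6 dvd n\<close>] be_C'[OF n0 \<open>6 dvd n\<close>] e by auto
    have "(\<forall>x. ex1 (al n C (x-1)) (al n C (x+1)) (be n C x)) \<and> (\<forall>x. ex1 (al n C x) (be n C (x - int k)) (be n C (x + int k)))"
      unfolding aC using conv6[of "int j" "int k"] j K6 by simp
    then show ?thesis using TI by blast
  qed
qed

theorem theorem1p2:
  fixes n k :: nat and C :: "gpv set"
  assumes "n \<ge> 3" and "0 < k" and "k < n" and "(2 * k) mod n \<noteq> 0"
    and "C \<subseteq> gp_verts n"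
  shows "total_perfect_code n k C \<longleftrightarrow>
    ((n mod 3 = 0 \<and> k mod 3 \<noteq> 0 \<and> (\<exists>j<3. C = code_C n j)) \<or>
     (n mod 6 = 0 \<and> (k mod 6 = 1 \<or> k mod 6 = 5) \<and> (\<exists>j<6. C = code_C' n j)))"
  apply (rule iffI)
   apply (erule thm_fwd[OF assms])
  apply (erule thm_bwd[OF assms])
  done

end
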